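(* Let $\hat S$ be a finite set of graphs with a distance $D$ (nonnegative, symmetric, satisfying the triangle inequality), and let $N\ge1$. Let the diversity $\mathrm{div}$ be one of: Average $\frac{2}{N(N-1)}\sum_{i\ne j}D(G_i,G_j)$, Bottleneck $\min_{i\neq j}D(G_i,G_j)$, or Energy with parameter $\gamma>0$, $-\frac{1}{N(N-1)}\sum_{i\ne j}D(G_i,G_j)^{-\gamma}$. Let $S$ be the set of $N$ graphs selected from $\hat S$ by the greedy algorithm, and let $\bar S$ be a maximally diverse subset of $\hat S$ with $|\bar S|=N$. Then $\mathrm{div}(S)\ge\frac12\,\mathrm{div}(\bar S)$ for Average and for Bottleneck, and $\mathrm{div}(S)\ge 2^{\gamma}\,\mathrm{div}(\bar S)$ for Energy with parameter $\gamma$.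
   Context: Greedy algorithm: start with $S=\emptyset$; at the first step add a graph of $\hat S$ chosen uniformly at random; at each subsequent step add the graph $G\in\hat S$ with the best fitness with respect to the current $S$, where the fitness is $\sum_{A\in S}D(G,A)$ (to be maximized) for Average, $\min_{A\in S}D(G,A)$ (to be maximized) for Bottleneck, and $\sum_{A\in S}D(G,A)^{-\gamma}$ (to be minimized) for Energy; stop after $N$ graphs have been selected. Note that Energy values are nonpositive, so the Energy inequality says the energy sum of $S$ is at most $2^\gamma$ times that of $\bar S$. *)

theory Defs
  imports Main Complex_Main
begin

text \<open>Graphs are modelled by an arbitrary type 'a; only the distance D on them matters.\<close>

datatype div_kind = Average | Bottleneck | Energy real

definition diversity :: "div_kind \<Rightarrow> ('a \<Rightarrow> 'a \<Rightarrow> real) \<Rightarrow> 'a set \<Rightarrow> real" where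
  "diversity k D S = (let N = real (card S); P = {(A, B). A \<in> S \<and> B \<in> S \<and> A \<noteq> B} in
     (case k of
        Average \<Rightarrow> 2 / (N * (N - 1)) * (\<Sum>(A, B)\<in>P. D A B)
      | Bottleneck \<Rightarrow> (if card S < 2 then 0 else Min ((\<lambda>(A, B). D A B) ` P))
      | Energy \<gamma> \<Rightarrow> - (1 / (N * (N - 1))) * (\<Sum>(A, B)\<in>P. D A B powr (- \<gamma>))))"

definition fitness :: "div_kind \<Rightarrow> ('a \<Rightarrow> 'a \<Rightarrow> real) \<Rightarrow> 'a set \<Rightarrow> 'a \<Rightarrow> real" where
  "fitness k D S G = (case k of
        Average \<Rightarrow> (\<Sum>A\<in>S. D G A)
      | Bottleneck \<Rightarrow> Min ((\<lambda>A. D G A) ` S)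
      | Energy \<gamma> \<Rightarrow> (\<Sum>A\<in>S. D G A powr (- \<gamma>)))"

definition at_least_as_good :: "div_kind \<Rightarrow> real \<Rightarrow> real \<Rightarrow> bool" where
  "at_least_as_good k a b = (case k of Energy _ \<Rightarrow> a \<le> b | _ \<Rightarrow> b \<le> a)"

text \<open>xs is a possible run of the greedy algorithm (arbitrary first choice, arbitrary tie-breaking).\<close>
definition greedy_run :: "div_kind \<Rightarrow> ('a \<Rightarrow> 'a \<Rightarrow> real) \<Rightarrow> 'a set \<Rightarrow> nat \<Rightarrow> 'a list \<Rightarrow> bool" where
  "greedy_run k D U N xs \<longleftrightarrow> length xs = N \<and> distinct xs \<and> set xs \<subseteq> U \<and>
     (\<forall>i. 0 < i \<and> i < N \<longrightarrow>
        (\<forall>G \<in> U - set (take i xs).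
           at_least_as_good k (fitness k D (set (take i xs)) (xs ! i))
                              (fitness k D (set (take i xs)) G)))"

definition maximally_diverse :: "div_kind \<Rightarrow> ('a \<Rightarrow> 'a \<Rightarrow> real) \<Rightarrow> 'a set \<Rightarrow> nat \<Rightarrow> 'a set \<Rightarrow> bool" where
  "maximally_diverse k D U N T \<longleftrightarrow> T \<subseteq> U \<and> card T = N \<and>
     (\<forall>T' \<subseteq> U. card T' = N \<longrightarrow> diversity k D T' \<le> diversity k D T)"

end

theory Submission imports Defs begin
lemma key:
  fixes D :: "'a \<Rightarrow> 'a \<Rightarrow> real"
  assumes nn: "\<And>x y. x \<in> U \<Longrightarrow> y \<in> U \<Longrightarrow> D x y \<ge> 0"
    and sym: "\<And>x y. x \<in> U \<Longrightarrow> y \<in> U \<Longrightarrow> D x y = D y x"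
    and tri: "\<And>x y z. x \<in> U \<Longrightarrow> y \<in> U \<Longrightarrow> z \<in> U \<Longrightarrow> D x z \<le> D x y + D y z"
  shows "card S = n \<Longrightarrow> finite S \<Longrightarrow> finite T \<Longrightarrow> S \<subseteq> U \<Longrightarrow> T \<subseteq> U \<Longrightarrow> card T = Suc (card S) \<Longrightarrow>
     \<exists>c\<in>T-S. \<exists>\<sigma>. bij_betw \<sigma> S (T-{c}) \<and> (\<forall>a\<in>S. D c (\<sigma> a) \<le> 2 * D c a)"
proof (induction n arbitrary: S T)
  case 0
  then have "S = {}" by auto
  with 0 obtain c where "T = {c}" by (metis card_1_singletonE One_nat_def card.empty)
  with \<open>S = {}\<close> show ?case by auto
next
  case (Suc n)
  show ?case
  proof (cases "S \<subseteq> T")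
    case True
    have "card (T - S) = 1" using Suc.prems True by (simp add: card_Diff_subset)
    then obtain c where c: "T - S = {c}" by (metis card_1_singletonE)
    have "T - {c} = S" using c True by auto
    moreover have "\<forall>a\<in>S. D c a \<le> 2 * D c a"
    proof
      fix a assume "a \<in> S"
      then have "a \<in> U" "c \<in> U" using c Suc.prems by auto
      then have "D c a \<ge> 0" using nn by blast
      then show "D c a \<le> 2 * D c a" by simp
    qed
    ultimately show ?thesis using c by (intro bexI[of _ c] exI[of _ id]) (auto simp: bij_betw_def)
  next
    case False
    define A where "A = S - T"
    define B where "B = T - S"
    have Ane: "A \<noteq> {}" using False A_def by auto
    have "\<not> T \<subseteq> S" using Suc.prems card_mono[of S T] by auto
    then have Bne: "B \<noteq> {}" using B_def by auto
    have finAB: "finite (A \<times> B)" using Suc.prems A_def B_def by auto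
    define f where "f = (\<lambda>p. D (fst p) (snd p))"
    define M where "M = Min (f ` (A \<times> B))"
    have "M \<in> f ` (A \<times> B)" unfolding M_def using finAB Ane Bne by (intro Min_in) auto
    then obtain a b where ab: "a \<in> A" "b \<in> B" "D a b = M" unfolding f_def by auto
    have minab: "\<And>a' b'. a' \<in> A \<Longrightarrow> b' \<in> B \<Longrightarrow> D a b \<le> D a' b'"
    proof -
      fix a' b' assume "a' \<in> A" "b' \<in> B"
      then have "f (a', b') \<in> f ` (A \<times> B)" by auto
      then show "D a b \<le> D a' b'" using ab finAB unfolding M_def f_def
        using Min_le[OF finite_imageI[OF finAB]] by auto
    qed
    have cS: "card (S - {a}) = n" using Suc.prems ab A_def by auto
    have cT: "card (T - {b}) = Suc (card (S - {a}))" using Suc.prems ab A_def B_def by auto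
    obtain c \<sigma> where c: "c \<in> (T - {b}) - (S - {a})" and bij: "bij_betw \<sigma> (S - {a}) (T - {b} - {c})"
      and le: "\<forall>a'\<in>S - {a}. D c (\<sigma> a') \<le> 2 * D c a'"
    proof -
      have "finite (S - {a})" "finite (T - {b})" "S - {a} \<subseteq> U" "T - {b} \<subseteq> U" using Suc.prems by auto
      from Suc.IH[OF cS this cT] show ?thesis using that by blast
    qed
    have aS: "a \<in> S" "a \<notin> T" "b \<in> T" "b \<notin> S" using ab A_def B_def by auto
    have cTS: "c \<in> T - S" using c aS by auto
    define \<tau> where "\<tau> = \<sigma>(a := b)"
    have "bij_betw \<tau> S (T - {c})"
    proof -
      have "bij_betw \<tau> (S - {a}) (T - {b} - {c})"
      proof -
        have "bij_betw \<tau> (S - {a}) (T - {b} - {c}) = bij_betw \<sigma> (S - {a}) (T - {b} - {c})"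
          by (rule bij_betw_cong) (simp add: \<tau>_def)
        then show ?thesis using bij by simp
      qed
      moreover have "\<tau> a = b" unfolding \<tau>_def by simp
      moreover have "bij_betw \<tau> {a} {b}" using \<open>\<tau> a = b\<close> by (simp add: bij_betw_def)
      ultimately have "bij_betw \<tau> ({a} \<union> (S - {a})) ({b} \<union> (T - {b} - {c}))"
        by (intro bij_betw_combine) auto
      then have "bij_betw \<tau> (insert a (S - {a})) (insert b (T - {b} - {c}))" by simp
      moreover have "insert a (S - {a}) = S" using aS by auto
      moreover have "insert b (T - {b} - {c}) = T - {c}" using aS c by auto
      ultimately show ?thesis by simp
    qed
    moreover have "\<forall>a'\<in>S. D c (\<tau> a') \<le> 2 * D c a'"
    proof
      fix a' assume a': "a' \<in> S"
      show "D c (\<tau> a') \<le> 2 * D c a'"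
      proof (cases "a' = a")
        case True
        have U: "c \<in> U" "a \<in> U" "b \<in> U" using cTS aS Suc.prems by auto
        have "D c b \<le> D c a + D a b" using tri U by blast
        moreover have "D a b \<le> D a c" using minab[of a c] ab cTS B_def by auto
        moreover have "D a c = D c a" using sym U by auto
        ultimately show ?thesis using True unfolding \<tau>_def by simp
      next
        case False
        then show ?thesis using le a' unfolding \<tau>_def by simp
      qed
    qed
    ultimately show ?thesis using cTS by blast
  qed
qed

definition prs :: "'a set \<Rightarrow> ('a \<times> 'a) set" where
  "prs X = {(A, B). A \<in> X \<and> B \<in> X \<and> A \<noteq> B}"

lemma finite_prs: "finite X \<Longrightarrow> finite (prs X)"
  by (rule finite_subset[of _ "X \<times> X"]) (auto simp: prs_def)

lemma prs_card1: "card X = 1 \<Longrightarrow> prs X = {}"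
  by (auto simp: prs_def card_1_singleton_iff)

lemma sum_prs_insert:
  assumes "finite X" "x \<notin> X"
  shows "(\<Sum>(A, B)\<in>prs (insert x X). f A B) = (\<Sum>(A, B)\<in>prs X. f A B) + (\<Sum>a\<in>X. f x a) + (\<Sum>a\<in>X. f a x)"
proof -
  have e: "prs (insert x X) = (prs X \<union> Pair x ` X) \<union> (\<lambda>a. (a, x)) ` X"
    using assms by (auto simp: prs_def)
  have d1: "prs X \<inter> Pair x ` X = {}" using assms by (auto simp: prs_def)
  have d2: "(prs X \<union> Pair x ` X) \<inter> (\<lambda>a. (a, x)) ` X = {}" using assms by (auto simp: prs_def)
  have f: "finite (prs X)" using assms finite_prs by auto
  have "(\<Sum>(A, B)\<in>prs (insert x X). f A B) =
      (\<Sum>(A, B)\<in>prs X. f A B) + (\<Sum>(A, B)\<in>Pair x ` X. f A B) + (\<Sum>(A, B)\<in>(\<lambda>a. (a, x)) ` X. f A B)"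
    unfolding e using d1 d2 f assms by (simp add: sum.union_disjoint)
  moreover have "(\<Sum>(A, B)\<in>Pair x ` X. f A B) = (\<Sum>a\<in>X. f x a)"
    by (subst sum.reindex) (auto simp: inj_on_def)
  moreover have "(\<Sum>(A, B)\<in>(\<lambda>a. (a, x)) ` X. f A B) = (\<Sum>a\<in>X. f a x)"
    by (subst sum.reindex) (auto simp: inj_on_def)
  ultimately show ?thesis by simp
qed

lemma gen:
  fixes D :: "'a \<Rightarrow> 'a \<Rightarrow> real" and h :: "real \<Rightarrow> real" and P :: "nat \<Rightarrow> 'a set" and x :: "nat \<Rightarrow> 'a"
  assumes nn: "\<And>x y. x \<in> U \<Longrightarrow> y \<in> U \<Longrightarrow> D x y \<ge> 0"
    and sym: "\<And>x y. x \<in> U \<Longrightarrow> y \<in> U \<Longrightarrow> D x y = D y x"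
    and tri: "\<And>x y z. x \<in> U \<Longrightarrow> y \<in> U \<Longrightarrow> z \<in> U \<Longrightarrow> D x z \<le> D x y + D y z"
    and c0: "c \<ge> 0"
    and hc: "\<And>u a b. u \<in> U \<Longrightarrow> a \<in> U \<Longrightarrow> b \<in> U \<Longrightarrow> u \<noteq> a \<Longrightarrow> u \<noteq> b \<Longrightarrow> D u b \<le> 2 * D u a
              \<Longrightarrow> h (D u a) \<le> c * h (D u b)"
    and gr: "\<And>m G. 0 < m \<Longrightarrow> m < N \<Longrightarrow> G \<in> U - P m \<Longrightarrow> (\<Sum>a\<in>P m. h (D (x m) a)) \<le> (\<Sum>a\<in>P m. h (D G a))"
    and Pcard: "\<And>m. m \<le> N \<Longrightarrow> card (P m) = m"
    and Pfin: "\<And>m. finite (P m)"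
    and PU: "\<And>m. P m \<subseteq> U"
    and Pins: "\<And>m. m < N \<Longrightarrow> P (Suc m) = insert (x m) (P m)"
    and xnot: "\<And>m. m < N \<Longrightarrow> x m \<notin> P m"
  shows "1 \<le> m \<Longrightarrow> m \<le> N \<longrightarrow> (\<forall>T. T \<subseteq> U \<longrightarrow> card T = m \<longrightarrow>
     (\<Sum>(A, B)\<in>prs (P m). h (D A B)) \<le> c * (\<Sum>(A, B)\<in>prs T. h (D A B)))"
proof (induction m rule: nat_induct_at_least)
  case base
  show ?case using Pcard by (auto simp: prs_card1)
next
  case (Suc m)
  show ?case
  proof (intro impI allI)
    fix T assume mN: "Suc m \<le> N" and TU: "T \<subseteq> U" and cT: "card T = Suc m"
    have finT: "finite T" using cT by (metis card.infinite nat.distinct(1))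
    have cP: "card T = Suc (card (P m))" using cT Pcard mN by auto
    obtain o' \<sigma> where o: "o' \<in> T - P m" and bij: "bij_betw \<sigma> (P m) (T - {o'})"
      and le: "\<forall>a\<in>P m. D o' (\<sigma> a) \<le> 2 * D o' a"
      using key[of U D, OF nn sym tri refl Pfin finT PU TU cP] by blast
    define F where "F X = (\<Sum>(A, B)\<in>prs X. h (D A B))" for X
    have hs: "\<And>X y. X \<subseteq> U \<Longrightarrow> y \<in> U \<Longrightarrow> (\<Sum>a\<in>X. h (D a y)) = (\<Sum>a\<in>X. h (D y a))"
      by (rule sum.cong) (auto simp: sym subsetD)
    have xU: "x m \<in> U" using Pins[of m] mN PU[of "Suc m"] by auto
    have oU: "o' \<in> U" using o TU by auto
    have "F (P (Suc m)) = F (P m) + 2 * (\<Sum>a\<in>P m. h (D (x m) a))"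
      unfolding F_def using Pins[of m] xnot[of m] mN sum_prs_insert[OF Pfin xnot[of m], of "\<lambda>A B. h (D A B)"]
        hs[OF PU xU] by auto
    also have "\<dots> \<le> F (P m) + 2 * (\<Sum>a\<in>P m. h (D o' a))"
      using gr[of m o'] Suc.hyps mN o oU by auto
    also have "(\<Sum>a\<in>P m. h (D o' a)) \<le> (\<Sum>a\<in>P m. c * h (D o' (\<sigma> a)))"
    proof (rule sum_mono)
      fix a assume a: "a \<in> P m"
      have "\<sigma> a \<in> T - {o'}" using bij a by (auto simp: bij_betw_def)
      then show "h (D o' a) \<le> c * h (D o' (\<sigma> a))"
        using hc[of o' a "\<sigma> a"] a le oU PU TU o by auto
    qed
    also have "(\<Sum>a\<in>P m. c * h (D o' (\<sigma> a))) = c * (\<Sum>b\<in>T - {o'}. h (D o' b))"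
      using sum.reindex_bij_betw[OF bij, of "\<lambda>b. h (D o' b)"] by (simp add: sum_distrib_left[symmetric])
    also have "F (P m) \<le> c * F (T - {o'})"
    proof -
      have "card (T - {o'}) = m" using cT o finT by simp
      moreover have "T - {o'} \<subseteq> U" using TU by auto
      ultimately show ?thesis using Suc.IH mN unfolding F_def by auto
    qed
    finally have 1: "F (P (Suc m)) \<le> c * F (T - {o'}) + 2 * (c * (\<Sum>b\<in>T - {o'}. h (D o' b)))"
      by simp
    have "T = insert o' (T - {o'})" using o by auto
    then have "F T = F (T - {o'}) + 2 * (\<Sum>b\<in>T - {o'}. h (D o' b))"
    proof -
      have f1: "finite (T - {o'})" using finT by simp
      have n1: "o' \<notin> T - {o'}" by simp
      have s1: "T - {o'} \<subseteq> U" using TU by auto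
      have "F (insert o' (T - {o'})) = F (T - {o'}) + (\<Sum>b\<in>T - {o'}. h (D o' b)) + (\<Sum>b\<in>T - {o'}. h (D b o'))"
        unfolding F_def by (rule sum_prs_insert[OF f1 n1])
      also have "(\<Sum>b\<in>T - {o'}. h (D b o')) = (\<Sum>b\<in>T - {o'}. h (D o' b))" by (rule hs[OF s1 oU])
      finally show ?thesis using \<open>T = insert o' (T - {o'})\<close> by simp
    qed
    with 1 have "F (P (Suc m)) \<le> c * F T" by (simp add: algebra_simps)
    then show "(\<Sum>(A, B)\<in>prs (P (Suc m)). h (D A B)) \<le> c * (\<Sum>(A, B)\<in>prs T. h (D A B))"
      unfolding F_def .
  qed
qed

lemma gen_bn:
  fixes D :: "'a \<Rightarrow> 'a \<Rightarrow> real" and P :: "nat \<Rightarrow> 'a set" and x :: "nat \<Rightarrow> 'a"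
  assumes nn: "\<And>x y. x \<in> U \<Longrightarrow> y \<in> U \<Longrightarrow> D x y \<ge> 0"
    and sym: "\<And>x y. x \<in> U \<Longrightarrow> y \<in> U \<Longrightarrow> D x y = D y x"
    and tri: "\<And>x y z. x \<in> U \<Longrightarrow> y \<in> U \<Longrightarrow> z \<in> U \<Longrightarrow> D x z \<le> D x y + D y z"
    and gr: "\<And>m G. 0 < m \<Longrightarrow> m < N \<Longrightarrow> G \<in> U - P m \<Longrightarrow> Min ((\<lambda>a. D G a) ` P m) \<le> Min ((\<lambda>a. D (x m) a) ` P m)"
    and Pcard: "\<And>m. m \<le> N \<Longrightarrow> card (P m) = m"
    and Pfin: "\<And>m. finite (P m)"
    and PU: "\<And>m. P m \<subseteq> U"
    and Pins: "\<And>m. m < N \<Longrightarrow> P (Suc m) = insert (x m) (P m)"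
    and xnot: "\<And>m. m < N \<Longrightarrow> x m \<notin> P m"
  shows "1 \<le> m \<Longrightarrow> m \<le> N \<longrightarrow> (\<forall>T. T \<subseteq> U \<longrightarrow> card T = m \<longrightarrow>
     (\<forall>A\<in>P m. \<forall>B\<in>P m. A \<noteq> B \<longrightarrow> (\<exists>u\<in>T. \<exists>v\<in>T. u \<noteq> v \<and> D u v \<le> 2 * D A B)))"
proof (induction m rule: nat_induct_at_least)
  case base
  show ?case
  proof (intro impI)
    assume "1 \<le> N"
    then have "card (P 1) = 1" using Pcard by auto
    then obtain z where "P 1 = {z}" by (auto simp: card_1_singleton_iff)
    then show "\<forall>T. T \<subseteq> U \<longrightarrow> card T = 1 \<longrightarrow>
     (\<forall>A\<in>P 1. \<forall>B\<in>P 1. A \<noteq> B \<longrightarrow> (\<exists>u\<in>T. \<exists>v\<in>T. u \<noteq> v \<and> D u v \<le> 2 * D A B))" by auto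
  qed
next
  case (Suc m)
  show ?case
  proof (intro impI allI ballI)
    fix T A B assume mN: "Suc m \<le> N" and TU: "T \<subseteq> U" and cT: "card T = Suc m"
      and A: "A \<in> P (Suc m)" and B: "B \<in> P (Suc m)" and AB: "A \<noteq> B"
    have finT: "finite T" using cT by (metis card.infinite nat.distinct(1))
    have cP: "card T = Suc (card (P m))" using cT Pcard mN by auto
    obtain o' \<sigma> where o: "o' \<in> T - P m" and bij: "bij_betw \<sigma> (P m) (T - {o'})"
      and le: "\<forall>a\<in>P m. D o' (\<sigma> a) \<le> 2 * D o' a"
      using key[of U D, OF nn sym tri refl Pfin finT PU TU cP] by blast
    have xU: "x m \<in> U" using Pins[of m] mN PU[of "Suc m"] by auto
    have oU: "o' \<in> U" using o TU by auto
    have Pne: "P m \<noteq> {}" using Pcard[of m] Suc.hyps mN by auto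
    have "Min ((\<lambda>a. D o' a) ` P m) \<in> (\<lambda>a. D o' a) ` P m" using Pne Pfin by (intro Min_in) auto
    then obtain a0 where a0: "a0 \<in> P m" "D o' a0 = Min ((\<lambda>a. D o' a) ` P m)" by auto
    have s0: "\<sigma> a0 \<in> T - {o'}" using bij a0 by (auto simp: bij_betw_def)
    have key2: "D o' (\<sigma> a0) \<le> 2 * D (x m) b" if b: "b \<in> P m" for b
    proof -
      have "D o' (\<sigma> a0) \<le> 2 * D o' a0" using le a0 by auto
      also have "D o' a0 \<le> Min ((\<lambda>a. D (x m) a) ` P m)" using a0 gr[of m o'] Suc.hyps mN o oU by auto
      also have "Min ((\<lambda>a. D (x m) a) ` P m) \<le> D (x m) b" using b Pfin by (intro Min_le) auto
      finally show ?thesis by simp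
    qed
    have PS: "P (Suc m) = insert (x m) (P m)" using Pins mN by auto
    show "\<exists>u\<in>T. \<exists>v\<in>T. u \<noteq> v \<and> D u v \<le> 2 * D A B"
    proof (cases "A \<in> P m \<and> B \<in> P m")
      case True
      have c1: "card (T - {o'}) = m" using cT o finT by simp
      have s1: "T - {o'} \<subseteq> U" using TU by auto
      have IH: "\<forall>T. T \<subseteq> U \<longrightarrow> card T = m \<longrightarrow>
         (\<forall>A\<in>P m. \<forall>B\<in>P m. A \<noteq> B \<longrightarrow> (\<exists>u\<in>T. \<exists>v\<in>T. u \<noteq> v \<and> D u v \<le> 2 * D A B))"
        using Suc.IH mN by simp
      have "\<exists>u\<in>T - {o'}. \<exists>v\<in>T - {o'}. u \<noteq> v \<and> D u v \<le> 2 * D A B"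
        using IH[rule_format, OF s1 c1] True AB by blast
      then obtain u v where "u \<in> T - {o'}" "v \<in> T - {o'}" "u \<noteq> v" "D u v \<le> 2 * D A B"
        by blast
      then show ?thesis by blast
    next
      case False
      then have "(A = x m \<and> B \<in> P m) \<or> (B = x m \<and> A \<in> P m)" using A B AB PS by auto
      then have "D o' (\<sigma> a0) \<le> 2 * D A B"
      proof
        assume "A = x m \<and> B \<in> P m" then show ?thesis using key2 by auto
      next
        assume h: "B = x m \<and> A \<in> P m"
        then have "D A B = D (x m) A" using sym xU PU by auto
        then show ?thesis using key2 h by auto
      qed
      moreover have "o' \<in> T" "\<sigma> a0 \<in> T" "o' \<noteq> \<sigma> a0" using s0 o by auto
      ultimately show ?thesis by blast
    qed
  qed
qed

lemma div_unfold:
  "diversity k D S = (let N = real (card S) in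
     (case k of
        Average \<Rightarrow> 2 / (N * (N - 1)) * (\<Sum>(A, B)\<in>prs S. D A B)
      | Bottleneck \<Rightarrow> (if card S < 2 then 0 else Min ((\<lambda>(A, B). D A B) ` prs S))
      | Energy \<gamma> \<Rightarrow> - (1 / (N * (N - 1))) * (\<Sum>(A, B)\<in>prs S. D A B powr (- \<gamma>))))"
  unfolding diversity_def prs_def Let_def by (rule refl)

theorem theorem2:
  fixes D :: "'a \<Rightarrow> 'a \<Rightarrow> real" and U :: "'a set" and N :: nat and k :: div_kind
    and xs :: "'a list" and Sbar :: "'a set"
  assumes "finite U"
    and "\<And>x y. x \<in> U \<Longrightarrow> y \<in> U \<Longrightarrow> D x y \<ge> 0"
    and "\<And>x. x \<in> U \<Longrightarrow> D x x = 0"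
    and "\<And>x y. x \<in> U \<Longrightarrow> y \<in> U \<Longrightarrow> D x y = D y x"
    and "\<And>x y z. x \<in> U \<Longrightarrow> y \<in> U \<Longrightarrow> z \<in> U \<Longrightarrow> D x z \<le> D x y + D y z"
    and "N \<ge> 1"
    and "\<And>\<gamma>. k = Energy \<gamma> \<Longrightarrow> \<gamma> > 0 \<and> (\<forall>x\<in>U. \<forall>y\<in>U. x \<noteq> y \<longrightarrow> D x y > 0)"
    and "greedy_run k D U N xs"
    and "maximally_diverse k D U N Sbar"
  shows "(case k of
            Energy \<gamma> \<Rightarrow> diversity k D (set xs) \<ge> 2 powr \<gamma> * diversity k D Sbar
          | _ \<Rightarrow> diversity k D (set xs) \<ge> 1 / 2 * diversity k D Sbar)"
proof -
  note nn = assms(2) and sym = assms(4) and tri = assms(5)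
  define P where "P m = set (take m xs)" for m
  define x where "x m = xs ! m" for m
  have len: "length xs = N" and dis: "distinct xs" and sU: "set xs \<subseteq> U"
    and grd: "\<And>i G. 0 < i \<Longrightarrow> i < N \<Longrightarrow> G \<in> U - P i \<Longrightarrow>
           at_least_as_good k (fitness k D (P i) (x i)) (fitness k D (P i) G)"
    using assms(8) unfolding greedy_run_def P_def x_def by auto
  have Pcard: "\<And>m. m \<le> N \<Longrightarrow> card (P m) = m"
    unfolding P_def using dis len by (simp add: distinct_card min_def)
  have Pfin: "\<And>m. finite (P m)" unfolding P_def by simp
  have PU: "\<And>m. P m \<subseteq> U" unfolding P_def using sU set_take_subset by fastforce
  have Pins: "\<And>m. m < N \<Longrightarrow> P (Suc m) = insert (x m) (P m)"
    unfolding P_def x_def using len by (simp add: take_Suc_conv_app_nth)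
  have xnot: "\<And>m. m < N \<Longrightarrow> x m \<notin> P m"
  proof -
    fix m assume m: "m < N"
    have "distinct (take (Suc m) xs)" using dis by simp
    then show "x m \<notin> P m" unfolding P_def x_def using m len by (simp add: take_Suc_conv_app_nth)
  qed
  have PN: "P N = set xs" unfolding P_def using len by simp
  have SbU: "Sbar \<subseteq> U" and cSb: "card Sbar = N" using assms(9) unfolding maximally_diverse_def by auto
  have cX: "card (set xs) = N" using dis len distinct_card by blast
  have N1: "Suc 0 \<le> N" using assms(6) by simp
  have q0: "real N * (real N - 1) \<ge> 0" using assms(6) by simp
  show ?thesis
  proof (cases k)
    case Average
    have "(\<Sum>(A, B)\<in>prs (P N). - D A B) \<le> 1/2 * (\<Sum>(A, B)\<in>prs Sbar. - D A B)"
    proof (rule gen[of U D "1/2" "\<lambda>t. - t" N P x, OF nn sym tri, rule_format])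
      show "\<And>u a b. u \<in> U \<Longrightarrow> a \<in> U \<Longrightarrow> b \<in> U \<Longrightarrow> u \<noteq> a \<Longrightarrow> u \<noteq> b \<Longrightarrow> D u b \<le> 2 * D u a
              \<Longrightarrow> - D u a \<le> 1/2 * - D u b" by simp
      show "\<And>m G. 0 < m \<Longrightarrow> m < N \<Longrightarrow> G \<in> U - P m \<Longrightarrow> (\<Sum>a\<in>P m. - D (x m) a) \<le> (\<Sum>a\<in>P m. - D G a)"
        using grd Average by (simp add: at_least_as_good_def fitness_def sum_negf)
    qed (simp_all add: Pcard Pfin PU Pins xnot N1 SbU cSb)
    then have W: "(\<Sum>(A, B)\<in>prs Sbar. D A B) \<le> 2 * (\<Sum>(A, B)\<in>prs (set xs). D A B)"
      using PN by (simp add: sum_negf case_prod_beta)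
    define q where "q = 2 / (real N * (real N - 1))"
    have "q \<ge> 0" unfolding q_def using q0 by simp
    then have "1/2 * (q * (\<Sum>(A, B)\<in>prs Sbar. D A B)) \<le> q * (\<Sum>(A, B)\<in>prs (set xs). D A B)"
      using W mult_left_mono[OF W, of q] by (simp add: algebra_simps)
    then show ?thesis using Average cX cSb unfolding div_unfold q_def by (simp add: Let_def)
  next
    case (Energy \<gamma>)
    have g0: "\<gamma> > 0" and pos: "\<And>a b. a \<in> U \<Longrightarrow> b \<in> U \<Longrightarrow> a \<noteq> b \<Longrightarrow> D a b > 0"
      using assms(7)[OF Energy] by auto
    have "(\<Sum>(A, B)\<in>prs (P N). D A B powr - \<gamma>) \<le> 2 powr \<gamma> * (\<Sum>(A, B)\<in>prs Sbar. D A B powr - \<gamma>)"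
    proof (rule gen[of U D "2 powr \<gamma>" "\<lambda>t. t powr - \<gamma>" N P x, OF nn sym tri, rule_format])
      show "D u a powr - \<gamma> \<le> 2 powr \<gamma> * D u b powr - \<gamma>"
        if "u \<in> U" "a \<in> U" "b \<in> U" "u \<noteq> a" "u \<noteq> b" "D u b \<le> 2 * D u a" for u a b
      proof -
        have pa: "D u a > 0" and pb: "D u b > 0" using pos that by auto
        have "(2 * D u a) powr - \<gamma> \<le> D u b powr - \<gamma>"
          using powr_mono2'[of "-\<gamma>" "D u b" "2 * D u a"] g0 pb that(6) by simp
        moreover have "(2 * D u a) powr - \<gamma> = 2 powr - \<gamma> * D u a powr - \<gamma>"
          using pa by (simp add: powr_mult)
        moreover have "2 powr \<gamma> * 2 powr - \<gamma> = (1::real)" by (simp add: powr_add[symmetric])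
        ultimately have "2 powr \<gamma> * (2 powr - \<gamma> * D u a powr - \<gamma>) \<le> 2 powr \<gamma> * D u b powr - \<gamma>"
          by (simp add: mult_left_mono)
        then show ?thesis using \<open>2 powr \<gamma> * 2 powr - \<gamma> = (1::real)\<close> by (simp add: mult.assoc[symmetric])
      qed
      show "\<And>m G. 0 < m \<Longrightarrow> m < N \<Longrightarrow> G \<in> U - P m \<Longrightarrow> (\<Sum>a\<in>P m. D (x m) a powr - \<gamma>) \<le> (\<Sum>a\<in>P m. D G a powr - \<gamma>)"
        using grd Energy by (simp add: at_least_as_good_def fitness_def)
    qed (simp_all add: Pcard Pfin PU Pins xnot N1 SbU cSb)
    then have E: "(\<Sum>(A, B)\<in>prs (set xs). D A B powr - \<gamma>) \<le> 2 powr \<gamma> * (\<Sum>(A, B)\<in>prs Sbar. D A B powr - \<gamma>)"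
      using PN by simp
    define q where "q = 1 / (real N * (real N - 1))"
    have "q \<ge> 0" unfolding q_def using q0 by simp
    then have "q * (\<Sum>(A, B)\<in>prs (set xs). D A B powr - \<gamma>) \<le> q * (2 powr \<gamma> * (\<Sum>(A, B)\<in>prs Sbar. D A B powr - \<gamma>))"
      using mult_left_mono[OF E] by simp
    then have "2 powr \<gamma> * (- q * (\<Sum>(A, B)\<in>prs Sbar. D A B powr - \<gamma>)) \<le> - q * (\<Sum>(A, B)\<in>prs (set xs). D A B powr - \<gamma>)"
      by (simp add: algebra_simps)
    then show ?thesis using Energy cX cSb unfolding div_unfold q_def by (simp add: Let_def)
  next
    case Bottleneck
    show ?thesis
    proof (cases "N < 2")
      case True
      then show ?thesis using Bottleneck cX cSb unfolding div_unfold by (simp add: Let_def)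
    next
      case False
      have finX: "finite (prs (set xs))" by (simp add: finite_prs)
      have "prs (set xs) \<noteq> {}"
      proof -
        have "xs ! 0 \<noteq> xs ! 1" using dis len False by (simp add: nth_eq_iff_index_eq)
        moreover have "xs ! 0 \<in> set xs" "xs ! 1 \<in> set xs" using len False by auto
        ultimately show ?thesis unfolding prs_def by blast
      qed
      then have "Min ((\<lambda>(A, B). D A B) ` prs (set xs)) \<in> (\<lambda>(A, B). D A B) ` prs (set xs)"
        using finX by (intro Min_in) auto
      then obtain A B where AB: "(A, B) \<in> prs (set xs)" "D A B = Min ((\<lambda>(A, B). D A B) ` prs (set xs))"
        by auto
      have ABP: "A \<in> P N" "B \<in> P N" "A \<noteq> B" using AB(1) PN by (auto simp: prs_def)
      have "\<exists>u\<in>Sbar. \<exists>v\<in>Sbar. u \<noteq> v \<and> D u v \<le> 2 * D A B"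
      proof (rule gen_bn[of U D N P x, OF nn sym tri, rule_format])
        show "\<And>m G. 0 < m \<Longrightarrow> m < N \<Longrightarrow> G \<in> U - P m \<Longrightarrow> Min ((\<lambda>a. D G a) ` P m) \<le> Min ((\<lambda>a. D (x m) a) ` P m)"
          using grd Bottleneck by (simp add: at_least_as_good_def fitness_def)
      qed (use ABP in \<open>simp_all add: Pcard Pfin PU Pins xnot N1 SbU cSb\<close>)
      then obtain u v where uv: "u \<in> Sbar" "v \<in> Sbar" "u \<noteq> v" "D u v \<le> 2 * D A B" by blast
      have "finite Sbar" using SbU assms(1) finite_subset by auto
      have "Min ((\<lambda>(A, B). D A B) ` prs Sbar) \<le> D u v"
      proof (rule Min_le)
        show "finite ((\<lambda>(A, B). D A B) ` prs Sbar)" using \<open>finite Sbar\<close> finite_prs by blast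
        show "D u v \<in> (\<lambda>(A, B). D A B) ` prs Sbar" using uv unfolding prs_def by force
      qed
      then show ?thesis using Bottleneck cX cSb False uv AB unfolding div_unfold by (simp add: Let_def)
    qed
  qed
qed

end
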